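(* Let $p,q,r\in(0,1)$ with $p+q+r=1$. Let $X_1,\eta_2,\eta_3,\ldots$ be independent random variables, each taking the values $1,-1,0$ with probabilities $p,q,r$ respectively. Set $X_{n+1}=\eta_{n+1}X_1$ for $n\ge1$ and $S_n=\sum_{k=1}^nX_k$. Then, as $n\to\infty$: (a) $\dfrac{S_n-n(p-q)X_1}{\sqrt{n\,(p+q-(p-q)^2)}}$ converges in distribution to the law with distribution function $F(x)=(p+q)\Phi(x)+r\,\mathbf 1\{x\ge0\}$, where $\Phi$ is the standard normal distribution function; (b) $\dfrac{S_n-n(p-q)X_1}{n}\to0$ almost surely.
   Context: This is the elephant random walk with delays in which the elephant remembers only the first step. The limit in (a) is the mixture $(p+q)\mathcal N_{0,1}+r\delta_0$ of a standard normal law and a point mass at $0$. *)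

theory Defs
  imports "HOL-Probability.Probability"
begin

end

theory Submission
  imports Defs "HOL-Real_Asymp.Real_Asymp"
begin


lemma (in prob_space) indep_sets_reindex:
  assumes ind: "indep_sets F I" and inj: "inj_on g J" and sub: "g ` J \<subseteq> I"
  shows "indep_sets (\<lambda>j. F (g j)) J"
  unfolding indep_sets_def
proof (intro conjI ballI allI impI)
  fix j assume "j \<in> J" thus "F (g j) \<subseteq> events" using ind sub by (auto simp: indep_sets_def)
next
  fix K A assume K: "K \<subseteq> J" "K \<noteq> {}" "finite K" and A: "A \<in> Pi K (\<lambda>j. F (g j))"
  define B where "B i = A (the_inv_into K g i)" for i
  have injK: "inj_on g K" using inj K(1) by (rule inj_on_subset)
  have Bg: "B (g k) = A k" if "k \<in> K" for k
    using that injK by (simp add: B_def the_inv_into_f_f)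
  have "prob (\<Inter>i\<in>g ` K. B i) = (\<Prod>i\<in>g ` K. prob (B i))"
    by (rule indep_setsD[OF ind]) (use K sub A Bg in auto)
  moreover have "(\<Inter>i\<in>g ` K. B i) = (\<Inter>k\<in>K. A k)" using Bg by auto
  moreover have "(\<Prod>i\<in>g ` K. prob (B i)) = (\<Prod>k\<in>K. prob (A k))"
    using injK Bg by (simp add: prod.reindex)
  ultimately show "prob (\<Inter>j\<in>K. A j) = (\<Prod>j\<in>K. prob (A j))" by simp
qed

lemma (in prob_space) indep_vars_reindex:
  assumes ind: "indep_vars M' X I" and inj: "inj_on g J" and sub: "g ` J \<subseteq> I"
  shows "indep_vars (\<lambda>j. M' (g j)) (\<lambda>j. X (g j)) J"
  using ind sub indep_sets_reindex[OF _ inj sub, where F="\<lambda>i. sigma_sets (space M) { X i -` A \<inter> space M | A. A \<in> sets (M' i)}"]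
  unfolding indep_vars_def by auto

lemma (in prob_space) three_point_AE:
  fixes V :: "'a \<Rightarrow> real"
  assumes V[measurable]: "V \<in> borel_measurable M"
    and d: "prob {\<omega>\<in>space M. V \<omega> = 1} = p" "prob {\<omega>\<in>space M. V \<omega> = -1} = q"
      "prob {\<omega>\<in>space M. V \<omega> = 0} = r" and s: "p + q + r = 1"
  shows "AE \<omega> in M. V \<omega> = 1 \<or> V \<omega> = -1 \<or> V \<omega> = 0"
proof -
  have "prob ({\<omega>\<in>space M. V \<omega> = 1} \<union> ({\<omega>\<in>space M. V \<omega> = -1} \<union> {\<omega>\<in>space M. V \<omega> = 0}))
     = prob {\<omega>\<in>space M. V \<omega> = 1} + (prob {\<omega>\<in>space M. V \<omega> = -1} + prob {\<omega>\<in>space M. V \<omega> = 0})"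
    by (subst finite_measure_Union; (subst finite_measure_Union)?) auto
  also have "\<dots> = 1" using d s by simp
  finally have "AE \<omega> in M. \<omega> \<in> {\<omega>\<in>space M. V \<omega> = 1} \<union> ({\<omega>\<in>space M. V \<omega> = -1} \<union> {\<omega>\<in>space M. V \<omega> = 0})"
    by (rule AE_prob_1)
  thus ?thesis by auto
qed

lemma (in prob_space) three_point_integral:
  fixes V :: "'a \<Rightarrow> real" and f :: "real \<Rightarrow> real"
  assumes V[measurable]: "V \<in> borel_measurable M"
    and d: "prob {\<omega>\<in>space M. V \<omega> = 1} = p" "prob {\<omega>\<in>space M. V \<omega> = -1} = q"
      "prob {\<omega>\<in>space M. V \<omega> = 0} = r" and s: "p + q + r = 1"
    and f[measurable]: "f \<in> borel_measurable borel"
  shows "integrable M (\<lambda>\<omega>. f (V \<omega>))"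
    and "expectation (\<lambda>\<omega>. f (V \<omega>)) = p * f 1 + q * f (-1) + r * f 0"
proof -
  let ?A1 = "{\<omega>\<in>space M. V \<omega> = 1}" and ?A2 = "{\<omega>\<in>space M. V \<omega> = -1}" and ?A3 = "{\<omega>\<in>space M. V \<omega> = 0}"
  define g where "g \<omega> = f 1 * indicator ?A1 \<omega> + f (-1) * indicator ?A2 \<omega> + f 0 * indicator ?A3 \<omega>" for \<omega>
  have ae: "AE \<omega> in M. f (V \<omega>) = g \<omega>"
    using three_point_AE[OF V d s] AE_space by eventually_elim (auto simp: g_def indicator_def)
  have gi: "integrable M g" unfolding g_def by (intro Bochner_Integration.integrable_add integrable_mult_right integrable_real_indicator) (auto simp: emeasure_eq_measure)
  have gint: "expectation g = p * f 1 + q * f (-1) + r * f 0"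
  proof -
    have i: "integrable M (indicat_real {\<omega>\<in>space M. V \<omega> = c})" for c
      by (intro integrable_real_indicator) (auto simp: emeasure_eq_measure)
    show ?thesis unfolding g_def
      apply (subst Bochner_Integration.integral_add, (intro Bochner_Integration.integrable_add integrable_mult_right i)+)
      apply (subst Bochner_Integration.integral_add, (intro Bochner_Integration.integrable_add integrable_mult_right i)+)
      using d by (simp add: Int_absorb2)
  qed
  show "integrable M (\<lambda>\<omega>. f (V \<omega>))"
    using gi ae by (subst integrable_cong_AE) auto
  show "expectation (\<lambda>\<omega>. f (V \<omega>)) = p * f 1 + q * f (-1) + r * f 0"
    using ae gint gi by (subst integral_cong_AE[where g=g]) auto
qed

lemma (in prob_space) three_point_prob:
  fixes V :: "'a \<Rightarrow> real"
  assumes V[measurable]: "V \<in> borel_measurable M"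
    and d: "prob {\<omega>\<in>space M. V \<omega> = 1} = p" "prob {\<omega>\<in>space M. V \<omega> = -1} = q"
      "prob {\<omega>\<in>space M. V \<omega> = 0} = r" and s: "p + q + r = 1"
    and A[measurable]: "A \<in> sets borel"
  shows "prob (V -` A \<inter> space M) = p * indicator A 1 + q * indicator A (-1) + r * indicator A 0"
proof -
  have "prob (V -` A \<inter> space M) = expectation (indicator (V -` A \<inter> space M))"
    by simp
  also have "\<dots> = expectation (\<lambda>\<omega>. indicator A (V \<omega>))"
    by (intro Bochner_Integration.integral_cong) (auto simp: indicator_def)
  also have "\<dots> = p * indicator A 1 + q * indicator A (-1) + r * indicator A 0"
    by (rule three_point_integral(2)[OF V d s]) simp
  finally show ?thesis .
qed

lemma (in prob_space) three_point_distr: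
  fixes V V' :: "'a \<Rightarrow> real"
  assumes V[measurable]: "V \<in> borel_measurable M"
    and d: "prob {\<omega>\<in>space M. V \<omega> = 1} = p" "prob {\<omega>\<in>space M. V \<omega> = -1} = q"
      "prob {\<omega>\<in>space M. V \<omega> = 0} = r" and s: "p + q + r = 1"
  assumes V'[measurable]: "V' \<in> borel_measurable M"
    and d': "prob {\<omega>\<in>space M. V' \<omega> = 1} = p" "prob {\<omega>\<in>space M. V' \<omega> = -1} = q"
      "prob {\<omega>\<in>space M. V' \<omega> = 0} = r"
  shows "distr M borel V = distr M borel V'"
proof (rule measure_eqI)
  fix A assume "A \<in> sets (distr M borel V)"
  hence A[measurable]: "A \<in> sets borel" by simp
  show "emeasure (distr M borel V) A = emeasure (distr M borel V') A"
    by (simp add: emeasure_distr emeasure_eq_measure three_point_prob[OF V d s A] three_point_prob[OF V' d' s A])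
qed simp

lemma squeeze_limit:
  fixes F :: "nat \<Rightarrow> real \<Rightarrow> real" and G :: "real \<Rightarrow> real" and H :: "nat \<Rightarrow> real"
  assumes conv: "\<And>z. (\<lambda>m. F m z) \<longlonglongrightarrow> G z" and cont: "isCont G y"
    and bnd: "\<And>\<delta>. \<delta> > 0 \<Longrightarrow> eventually (\<lambda>m. F m (y - \<delta>) \<le> H m \<and> H m \<le> F m (y + \<delta>)) sequentially"
  shows "H \<longlonglongrightarrow> G y"
  unfolding tendsto_iff
proof (intro allI impI)
  fix e :: real assume e: "e > 0"
  from cont have "G \<midarrow>y\<rightarrow> G y" by (simp add: isCont_def)
  then obtain d where d: "d > 0" and dG: "\<And>x. x \<noteq> y \<Longrightarrow> norm (x - y) < d \<Longrightarrow> norm (G x - G y) < e/2"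
    unfolding LIM_eq using e by (metis half_gt_zero)
  have g1: "\<bar>G (y - d/2) - G y\<bar> < e/2" using dG[of "y - d/2"] d by auto
  have g2: "\<bar>G (y + d/2) - G y\<bar> < e/2" using dG[of "y + d/2"] d by auto
  have c1: "eventually (\<lambda>m. dist (F m (y - d/2)) (G (y - d/2)) < e/2) sequentially"
    by (rule tendstoD[OF conv]) (use e in simp)
  have c2: "eventually (\<lambda>m. dist (F m (y + d/2)) (G (y + d/2)) < e/2) sequentially"
    by (rule tendstoD[OF conv]) (use e in simp)
  have b: "eventually (\<lambda>m. F m (y - d/2) \<le> H m \<and> H m \<le> F m (y + d/2)) sequentially"
    using d by (intro bnd) simp
  show "eventually (\<lambda>m. dist (H m) (G y) < e) sequentially"
    using c1 c2 b
  proof eventually_elim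
    case (elim m)
    thus ?case using g1 g2 unfolding dist_real_def by (simp only: abs_less_iff) linarith
  qed
qed

lemma isCont_std_normal_cdf: "isCont (cdf std_normal_distribution) x"
proof -
  interpret real_distribution std_normal_distribution by (rule real_dist_normal_dist)
  have "{x} \<in> null_sets std_normal_distribution"
  proof (subst null_sets_density_iff)
    have "AE y in lborel. y \<in> {x} \<longrightarrow> ennreal (std_normal_density y) = 0"
      using AE_lborel_singleton[of x] by eventually_elim auto
    thus "{x} \<in> sets lborel \<and> (AE y in lborel. y \<in> {x} \<longrightarrow> ennreal (std_normal_density y) = 0)" by simp
  qed simp
  hence "measure std_normal_distribution {x} = 0" by (simp add: measure_def null_setsD1)
  thus ?thesis by (simp add: isCont_cdf)
qed


lemma (in prob_space) mixture:
  fixes X1 W :: "'a \<Rightarrow> real"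
  assumes ind: "indep_var borel X1 borel W"
    and d: "prob {\<omega>\<in>space M. X1 \<omega> = 1} = p" "prob {\<omega>\<in>space M. X1 \<omega> = -1} = q"
      "prob {\<omega>\<in>space M. X1 \<omega> = 0} = r" and s: "p + q + r = 1"
  shows "prob {\<omega>\<in>space M. X1 \<omega> * W \<omega> \<le> x} =
    p * prob {\<omega>\<in>space M. W \<omega> \<le> x} + q * prob {\<omega>\<in>space M. - W \<omega> \<le> x} + r * indicator {0..} x"
proof -
  have X1[measurable]: "X1 \<in> borel_measurable M" using indep_var_rv1[OF ind] by simp
  have W[measurable]: "W \<in> borel_measurable M" using indep_var_rv2[OF ind] by simp
  let ?B1 = "{\<omega>\<in>space M. X1 \<omega> \<in> {1} \<and> W \<omega> \<in> {..x}}"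
  let ?B2 = "{\<omega>\<in>space M. X1 \<omega> \<in> {-1} \<and> W \<omega> \<in> {-x..}}"
  let ?B3 = "{\<omega>\<in>space M. X1 \<omega> = 0 \<and> 0 \<le> x}"
  have "prob {\<omega>\<in>space M. X1 \<omega> * W \<omega> \<le> x} = prob (?B1 \<union> ?B2 \<union> ?B3)"
  proof (rule measure_eq_AE)
    show "AE \<omega> in M. (\<omega> \<in> {\<omega>\<in>space M. X1 \<omega> * W \<omega> \<le> x}) = (\<omega> \<in> ?B1 \<union> ?B2 \<union> ?B3)"
      using three_point_AE[OF X1 d s] AE_space
    proof eventually_elim
      case (elim \<omega>)
      thus ?case by (elim disjE) auto
    qed
  qed measurable
  also have "\<dots> = prob (?B1 \<union> ?B2) + prob ?B3"
    by (rule finite_measure_Union) (measurable, auto)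
  also have "prob (?B1 \<union> ?B2) = prob ?B1 + prob ?B2"
    by (rule finite_measure_Union) (measurable, auto)
  also have "prob ?B1 = prob {\<omega>\<in>space M. X1 \<omega> \<in> {1}} * prob {\<omega>\<in>space M. W \<omega> \<in> {..x}}"
    by (rule prob_indep_random_variable[OF ind]) auto
  also have "prob ?B2 = prob {\<omega>\<in>space M. X1 \<omega> \<in> {-1}} * prob {\<omega>\<in>space M. W \<omega> \<in> {-x..}}"
    by (rule prob_indep_random_variable[OF ind]) auto
  also have "prob ?B3 = r * indicator {0..} x"
    using d by (auto simp: indicator_def)
  moreover have "{\<omega>\<in>space M. W \<omega> \<in> {-x..}} = {\<omega>\<in>space M. - W \<omega> \<le> x}" by auto
  moreover have "{\<omega>\<in>space M. W \<omega> \<in> {..x}} = {\<omega>\<in>space M. W \<omega> \<le> x}" by auto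
  moreover have "{\<omega>\<in>space M. X1 \<omega> \<in> {1}} = {\<omega>\<in>space M. X1 \<omega> = 1}" by auto
  moreover have "{\<omega>\<in>space M. X1 \<omega> \<in> {-1}} = {\<omega>\<in>space M. X1 \<omega> = -1}" by auto
  ultimately show ?thesis using d by simp
qed



lemma yy_lim:
  fixes x c s :: real assumes s: "s > 0"
  shows "(\<lambda>m. (x * sqrt (real (Suc m) * s) - c) / sqrt (real m * s)) \<longlonglongrightarrow> x"
proof -
  have e: "eventually (\<lambda>m. x * (sqrt (real (Suc m)) / sqrt (real m)) - (c / sqrt s) * (1 / sqrt (real m))
      = (x * sqrt (real (Suc m) * s) - c) / sqrt (real m * s)) sequentially"
    using eventually_gt_at_top[of "0::nat"]
  proof eventually_elim
    case (elim m)
    have "sqrt (real (Suc m) * s) = sqrt (real (Suc m)) * sqrt s" "sqrt (real m * s) = sqrt (real m) * sqrt s"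
      by (simp_all only: real_sqrt_mult)
    thus ?case using s elim by (simp add: field_simps)
  qed
  have l1: "(\<lambda>m. sqrt (real (Suc m)) / sqrt (real m)) \<longlonglongrightarrow> 1" by real_asymp
  have l2: "(\<lambda>m::nat. 1 / sqrt (real m)) \<longlonglongrightarrow> 0" by real_asymp
  have "(\<lambda>m. x * (sqrt (real (Suc m)) / sqrt (real m)) - (c / sqrt s) * (1 / sqrt (real m))) \<longlonglongrightarrow> x * 1 - (c / sqrt s) * 0"
    by (intro tendsto_intros l1 l2)
  hence "(\<lambda>m. x * (sqrt (real (Suc m)) / sqrt (real m)) - (c / sqrt s) * (1 / sqrt (real m))) \<longlonglongrightarrow> x" by simp
  thus ?thesis by (rule Lim_transform_eventually[OF _ e])
qed

lemma pq_var_pos: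
  fixes p q :: real assumes "0 < p" "0 < q" "p + q \<le> 1"
  shows "p + q - (p - q)\<^sup>2 > 0"
proof -
  have "(p+q)*(p+q) \<le> (p+q)*1" using assms by (intro mult_left_mono) auto
  moreover have "p*q > 0" using assms by simp
  ultimately show ?thesis by (simp add: power2_eq_square algebra_simps)
qed

lemma (in prob_space) clt_three:
  fixes V :: "nat \<Rightarrow> 'a \<Rightarrow> real" and p q r c x :: real
  assumes ind: "indep_vars (\<lambda>_. borel) V UNIV"
    and d1: "\<And>i. prob {\<omega>\<in>space M. V i \<omega> = 1} = p" and d2: "\<And>i. prob {\<omega>\<in>space M. V i \<omega> = -1} = q"
    and d3: "\<And>i. prob {\<omega>\<in>space M. V i \<omega> = 0} = r" and s: "p + q + r = 1" and pq: "0 < p" "0 < q" "0 \<le> r"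
  shows "(\<lambda>m. prob {\<omega>\<in>space M. ((\<Sum>i<m. V i \<omega> - (p - q)) + c) / sqrt (real (Suc m) * (p + q - (p - q)\<^sup>2)) \<le> x})
          \<longlonglongrightarrow> cdf std_normal_distribution x"
proof -
  define \<sigma>2 where "\<sigma>2 = p + q - (p - q)\<^sup>2"
  have \<sigma>2: "\<sigma>2 > 0" unfolding \<sigma>2_def using pq s by (intro pq_var_pos) auto
  have V[measurable]: "V i \<in> borel_measurable M" for i using ind unfolding indep_vars_def by auto
  have E: "expectation (V i) = p - q" for i
    using three_point_integral(2)[OF V d1 d2 d3 s, of "\<lambda>v. v"] by simp
  have I2: "integrable M (\<lambda>\<omega>. (V i \<omega>)\<^sup>2)" for i
    using three_point_integral(1)[OF V d1 d2 d3 s, of "\<lambda>v. v\<^sup>2"] by simp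
  have Var: "variance (V i) = (sqrt \<sigma>2)\<^sup>2" for i
  proof -
    have "variance (V i) = expectation (\<lambda>\<omega>. (\<lambda>v. (v - (p - q))\<^sup>2) (V i \<omega>))" by (simp add: E)
    also have "\<dots> = p * (1 - (p - q))\<^sup>2 + q * (-1 - (p - q))\<^sup>2 + r * (0 - (p - q))\<^sup>2"
      by (rule three_point_integral(2)[OF V d1 d2 d3 s]) simp
    also have "\<dots> = \<sigma>2"
    proof -
      have "r = 1 - p - q" using s by simp
      show ?thesis unfolding \<sigma>2_def by (simp only: \<open>r = 1 - p - q\<close>) (simp add: power2_eq_square algebra_simps)
    qed
    finally show ?thesis using \<sigma>2 by simp
  qed
  have D: "distr M borel (V i) = distr M borel (V 0)" for i
    by (rule three_point_distr[OF V d1 d2 d3 s V d1 d2 d3])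
  have sq: "sqrt \<sigma>2 > 0" using \<sigma>2 by simp
  have clt: "weak_conv_m (\<lambda>n. distr M borel (\<lambda>x. (\<Sum>i<n. V i x - (p - q)) / sqrt (real n * (sqrt \<sigma>2)\<^sup>2))) std_normal_distribution"
    by (rule central_limit_theorem[OF ind E sq I2 Var D])
  define T where "T m \<omega> = (\<Sum>i<m. V i \<omega> - (p - q)) / sqrt (real m * \<sigma>2)" for m \<omega>
  have T[measurable]: "T m \<in> borel_measurable M" for m unfolding T_def by measurable
  define F where "F m z = prob {\<omega>\<in>space M. T m \<omega> \<le> z}" for m z
  have conv: "(\<lambda>m. F m z) \<longlonglongrightarrow> cdf std_normal_distribution z" for z
  proof -
    have "(\<lambda>m. cdf (distr M borel (T m)) z) \<longlonglongrightarrow> cdf std_normal_distribution z"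
      using clt isCont_std_normal_cdf[of z] \<sigma>2 unfolding weak_conv_m_def weak_conv_def T_def by simp
    moreover have "cdf (distr M borel (T m)) z = F m z" for m
      unfolding cdf_def F_def by (subst measure_distr) (auto intro!: arg_cong[where f=prob])
    ultimately show ?thesis by simp
  qed
  have mono: "F m a \<le> F m b" if "a \<le> b" for m a b
    unfolding F_def using that by (intro finite_measure_mono) auto
  define yy where "yy m = (x * sqrt (real (Suc m) * \<sigma>2) - c) / sqrt (real m * \<sigma>2)" for m
  have yy: "yy \<longlonglongrightarrow> x" unfolding yy_def by (rule yy_lim[OF \<sigma>2])
  show ?thesis unfolding \<sigma>2_def[symmetric]
  proof (rule squeeze_limit[OF conv isCont_std_normal_cdf])
    fix \<delta> :: real assume \<delta>: "\<delta> > 0"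
    have "eventually (\<lambda>m. dist (yy m) x < \<delta>) sequentially" using yy \<delta> by (rule tendstoD)
    then show "eventually (\<lambda>m. F m (x - \<delta>) \<le> prob {\<omega>\<in>space M. ((\<Sum>i<m. V i \<omega> - (p - q)) + c) / sqrt (real (Suc m) * \<sigma>2) \<le> x}
       \<and> prob {\<omega>\<in>space M. ((\<Sum>i<m. V i \<omega> - (p - q)) + c) / sqrt (real (Suc m) * \<sigma>2) \<le> x} \<le> F m (x + \<delta>)) sequentially"
      using eventually_gt_at_top[of "0::nat"]
    proof eventually_elim
      case (elim m)
      have a: "sqrt (real (Suc m) * \<sigma>2) > 0" and b: "sqrt (real m * \<sigma>2) > 0" using elim \<sigma>2 by auto
      have "{\<omega>\<in>space M. ((\<Sum>i<m. V i \<omega> - (p - q)) + c) / sqrt (real (Suc m) * \<sigma>2) \<le> x}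
          = {\<omega>\<in>space M. T m \<omega> \<le> yy m}"
        unfolding T_def yy_def using a b by (auto simp: pos_divide_le_eq divide_le_cancel)
      hence "prob {\<omega>\<in>space M. ((\<Sum>i<m. V i \<omega> - (p - q)) + c) / sqrt (real (Suc m) * \<sigma>2) \<le> x} = F m (yy m)"
        by (simp add: F_def)
      moreover have "x - \<delta> \<le> yy m" "yy m \<le> x + \<delta>" using elim by (auto simp: dist_real_def)
      ultimately show ?case using mono by simp
    qed
  qed
qed



lemma (in prob_space) slln_three:
  fixes V :: "nat \<Rightarrow> 'a \<Rightarrow> real" and p q r :: real
  assumes ind: "indep_vars (\<lambda>_. borel) V UNIV"
    and d1: "\<And>i. prob {\<omega>\<in>space M. V i \<omega> = 1} = p" and d2: "\<And>i. prob {\<omega>\<in>space M. V i \<omega> = -1} = q"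
    and d3: "\<And>i. prob {\<omega>\<in>space M. V i \<omega> = 0} = r" and s: "p + q + r = 1"
  shows "AE \<omega> in M. (\<lambda>m. (\<Sum>i<m. V i \<omega> - (p - q)) / real (Suc m)) \<longlonglongrightarrow> 0"
proof -
  define \<mu> where "\<mu> = p - q"
  define Z where "Z i \<omega> = V i \<omega> - \<mu>" for i \<omega>
  have V[measurable]: "V i \<in> borel_measurable M" for i using ind unfolding indep_vars_def by auto
  have Z[measurable]: "Z i \<in> borel_measurable M" for i unfolding Z_def by measurable
  have EZ: "expectation (Z i) = 0" for i
  proof -
    have "expectation (Z i) = expectation (\<lambda>\<omega>. (\<lambda>v. v - \<mu>) (V i \<omega>))" by (simp add: Z_def[abs_def])
    also have "\<dots> = p * (1 - \<mu>) + q * (-1 - \<mu>) + r * (0 - \<mu>)"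
      by (rule three_point_integral(2)[OF V d1 d2 d3 s]) simp
    also have "\<dots> = 0"
    proof -
      have "r = 1 - p - q" using s by simp
      show ?thesis unfolding \<mu>_def by (simp only: \<open>r = 1 - p - q\<close>) (simp add: algebra_simps)
    qed
    finally show ?thesis .
  qed
  have indZ: "indep_vars (\<lambda>_. borel) Z UNIV"
    unfolding Z_def[abs_def] by (rule indep_vars_compose2[OF ind]) auto
  have AEZ: "AE \<omega> in M. Z i \<omega> \<in> {-1 - \<mu>..1 - \<mu>}" for i
    using three_point_AE[OF V[of i] d1[of i] d2[of i] d3[of i] s] by eventually_elim (auto simp: Z_def)
  have main: "AE \<omega> in M. eventually (\<lambda>m. \<bar>\<Sum>i<m. Z i \<omega>\<bar> < real m / real (Suc j)) sequentially" for j
  proof -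
    define e where "e = 1 / real (Suc j)"
    have e: "e > 0" by (simp add: e_def)
    define A where "A m = {\<omega>\<in>space M. e * real m \<le> \<bar>\<Sum>i<m. Z i \<omega>\<bar>}" for m
    have A[measurable]: "A m \<in> sets M" for m unfolding A_def by measurable
    have bnd: "prob (A m) \<le> 2 * exp (- (e\<^sup>2 / 2)) ^ m" for m
    proof (cases "m = 0")
      case True have "prob (A m) \<le> 1" by simp
      thus ?thesis using True by (simp only: power_0 mult_1_right)
    next
      case False
      interpret H: Hoeffding_ineq M "{..<m}" Z "\<lambda>_. -1 - \<mu>" "\<lambda>_. 1 - \<mu>" 0
      proof unfold_locales
        show "indep_vars (\<lambda>_. borel) Z {..<m}" by (rule indep_vars_subset[OF indZ]) auto
        show "AE x in M. Z i x \<in> {-1 - \<mu>..1 - \<mu>}" for i by (rule AEZ)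
        show "0 \<equiv> \<Sum>i<m. expectation (Z i)" by (simp add: EZ)
      qed simp
      have "prob {x\<in>space M. e * real m \<le> \<bar>(\<Sum>i\<in>{..<m}. Z i x) - 0\<bar>} \<le>
          2 * exp (-2 * (e * real m)\<^sup>2 / (\<Sum>i\<in>{..<m}. ((1 - \<mu>) - (-1 - \<mu>))\<^sup>2))"
        using False e by (intro H.Hoeffding_ineq_abs_ge) auto
      also have "-2 * (e * real m)\<^sup>2 / (\<Sum>i\<in>{..<m}. ((1 - \<mu>) - (-1 - \<mu>))\<^sup>2) = real m * (- (e\<^sup>2 / 2))"
        using False by (simp add: power2_eq_square field_simps)
      also have "exp (real m * (- (e\<^sup>2 / 2))) = exp (- (e\<^sup>2 / 2)) ^ m"
        by (rule exp_of_nat_mult)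
      finally show ?thesis by (simp add: A_def)
    qed
    have summ: "summable (\<lambda>m. measure M (A m))"
    proof (rule summable_comparison_test)
      show "\<exists>N. \<forall>n\<ge>N. norm (measure M (A n)) \<le> 2 * exp (- (e\<^sup>2 / 2)) ^ n"
        using bnd by auto
      have "exp (- (e\<^sup>2 / 2)) < 1" using e by simp
      thus "summable (\<lambda>n. 2 * exp (- (e\<^sup>2 / 2)) ^ n)"
        by (intro summable_mult summable_geometric) simp
    qed
    have "AE \<omega> in M. eventually (\<lambda>m. \<omega> \<in> space M - A m) sequentially"
      by (rule borel_cantelli_AE1[OF A _ summ]) (simp add: emeasure_eq_measure)
    thus ?thesis
    proof eventually_elim
      case (elim \<omega>)
      thus ?case by eventually_elim (auto simp: A_def e_def not_le)
    qed
  qed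
  have "AE \<omega> in M. \<forall>j. eventually (\<lambda>m. \<bar>\<Sum>i<m. Z i \<omega>\<bar> < real m / real (Suc j)) sequentially"
    using main by (subst AE_all_countable) auto
  thus ?thesis
  proof eventually_elim
    case (elim \<omega>)
    show ?case unfolding tendsto_iff
    proof (intro allI impI)
      fix \<epsilon> :: real assume "\<epsilon> > 0"
      then obtain n where n: "n > 0" "inverse (real n) < \<epsilon>" using ex_inverse_of_nat_less by blast
      then obtain j where j: "n = Suc j" using not0_implies_Suc by blast
      show "eventually (\<lambda>m. dist ((\<Sum>i<m. V i \<omega> - (p - q)) / real (Suc m)) 0 < \<epsilon>) sequentially"
        using elim[rule_format, of j]
      proof eventually_elim
        case (elim m)
        have "\<bar>\<Sum>i<m. V i \<omega> - (p - q)\<bar> / real (Suc m) < (real m / real (Suc j)) / real (Suc m)"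
          using elim by (intro divide_strict_right_mono) (auto simp: Z_def \<mu>_def)
        also have "\<dots> = (real m / real (Suc m)) / real (Suc j)" by simp
        also have "\<dots> \<le> 1 / real (Suc j)" by (rule divide_right_mono) auto
        also have "\<dots> < \<epsilon>" using n j by (simp add: inverse_eq_divide)
        finally show ?case by (simp add: dist_real_def)
      qed
    qed
  qed
qed



theorem theorem5p3:
  fixes M :: "'a measure"
    and p q r :: real
    and X1 :: "'a \<Rightarrow> real"
    and eta :: "nat \<Rightarrow> 'a \<Rightarrow> real"
    and Y X S :: "nat \<Rightarrow> 'a \<Rightarrow> real"
  assumes M: "prob_space M"
    and p: "0 < p" "p < 1" and q: "0 < q" "q < 1" and r: "0 < r" "r < 1"
    and pqr: "p + q + r = 1"
  defines "Y \<equiv> (\<lambda>k. if k = 1 then X1 else eta k)"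
  assumes indep: "prob_space.indep_vars M (\<lambda>_. borel) Y {1..}"
    and distr1: "\<And>k. k \<ge> 1 \<Longrightarrow> measure M {\<omega> \<in> space M. Y k \<omega> = 1} = p"
    and distrm1: "\<And>k. k \<ge> 1 \<Longrightarrow> measure M {\<omega> \<in> space M. Y k \<omega> = -1} = q"
    and distr0: "\<And>k. k \<ge> 1 \<Longrightarrow> measure M {\<omega> \<in> space M. Y k \<omega> = 0} = r"
  defines "X \<equiv> (\<lambda>k \<omega>. if k = 1 then X1 \<omega> else eta k \<omega> * X1 \<omega>)"
    and "S \<equiv> (\<lambda>n \<omega>. \<Sum>k\<in>{1..n}. X k \<omega>)"
  shows "weak_conv
           (\<lambda>n. cdf (distr M borel
              (\<lambda>\<omega>. (S n \<omega> - real n * (p - q) * X1 \<omega>) / sqrt (real n * (p + q - (p - q)\<^sup>2)))))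
           (\<lambda>x. (p + q) * cdf std_normal_distribution x + r * indicator {0..} x)
       \<and> (AE \<omega> in M. (\<lambda>n. (S n \<omega> - real n * (p - q) * X1 \<omega>) / real n) \<longlonglongrightarrow> 0)"
proof -
  interpret prob_space M by (rule M)
  define \<mu> where "\<mu> = p - q"
  define \<sigma>2 where "\<sigma>2 = p + q - (p - q)\<^sup>2"
  define V where "V i = eta (i + 2)" for i
  have Ymeas: "Y k \<in> borel_measurable M" if "k \<ge> 1" for k
    using indep that unfolding indep_vars_def by auto
  have X1m[measurable]: "X1 \<in> borel_measurable M" using Ymeas[of 1] by (simp add: Y_def)
  have Vm[measurable]: "V i \<in> borel_measurable M" for i using Ymeas[of "i+2"] by (simp add: Y_def V_def)
  have dX: "prob {\<omega>\<in>space M. X1 \<omega> = 1} = p" "prob {\<omega>\<in>space M. X1 \<omega> = -1} = q"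
      "prob {\<omega>\<in>space M. X1 \<omega> = 0} = r"
    using distr1[of 1] distrm1[of 1] distr0[of 1] by (simp_all add: Y_def)
  have dV: "prob {\<omega>\<in>space M. V i \<omega> = 1} = p" "prob {\<omega>\<in>space M. V i \<omega> = -1} = q"
      "prob {\<omega>\<in>space M. V i \<omega> = 0} = r" for i
    using distr1[of "i+2"] distrm1[of "i+2"] distr0[of "i+2"] by (simp_all add: Y_def V_def)
  have dVn: "prob {\<omega>\<in>space M. - V i \<omega> = 1} = q" "prob {\<omega>\<in>space M. - V i \<omega> = -1} = p"
      "prob {\<omega>\<in>space M. - V i \<omega> = 0} = r" for i
  proof -
    have "{\<omega>\<in>space M. - V i \<omega> = 1} = {\<omega>\<in>space M. V i \<omega> = -1}" by auto
    thus "prob {\<omega>\<in>space M. - V i \<omega> = 1} = q" using dV by simp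
    have "{\<omega>\<in>space M. - V i \<omega> = -1} = {\<omega>\<in>space M. V i \<omega> = 1}" by auto
    thus "prob {\<omega>\<in>space M. - V i \<omega> = -1} = p" using dV by simp
    have "{\<omega>\<in>space M. - V i \<omega> = 0} = {\<omega>\<in>space M. V i \<omega> = 0}" by auto
    thus "prob {\<omega>\<in>space M. - V i \<omega> = 0} = r" using dV by simp
  qed
  have indV: "indep_vars (\<lambda>_. borel) V UNIV"
  proof -
    have "indep_vars (\<lambda>j. borel) (\<lambda>j. Y (j + 2)) UNIV"
      by (rule indep_vars_reindex[OF indep]) (auto simp: inj_on_def)
    thus ?thesis by (rule indep_vars_cong[THEN iffD1, rotated -1]) (auto simp: Y_def V_def fun_eq_iff)
  qed
  have indVn: "indep_vars (\<lambda>_. borel) (\<lambda>i \<omega>. - V i \<omega>) UNIV"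
    by (rule indep_vars_compose2[OF indV]) auto
  have S_Suc: "S (Suc m) \<omega> = X1 \<omega> + X1 \<omega> * (\<Sum>i<m. V i \<omega>)" for m \<omega>
  proof (induction m)
    case 0 thus ?case by (simp add: S_def X_def)
  next
    case (Suc m)
    have "S (Suc (Suc m)) \<omega> = S (Suc m) \<omega> + X (Suc (Suc m)) \<omega>" by (simp add: S_def)
    thus ?case using Suc by (simp add: X_def V_def algebra_simps)
  qed
  have key: "S (Suc m) \<omega> - real (Suc m) * (p - q) * X1 \<omega> = X1 \<omega> * ((\<Sum>i<m. V i \<omega> - (p - q)) + (1 - (p - q)))" for m \<omega>
  proof -
    have e: "(\<Sum>i<m. V i \<omega> - (p - q)) = (\<Sum>i<m. V i \<omega>) - real m * (p - q)" by (simp add: sum_subtractf)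
    show ?thesis unfolding e S_Suc by (simp add: algebra_simps)
  qed
  have sumY: "(\<Sum>i\<in>{2..Suc m}. Y i \<omega>) = (\<Sum>i<m. V i \<omega>)" for m \<omega>
    by (induction m) (auto simp: Y_def V_def)
  show ?thesis
  proof
    show "weak_conv
           (\<lambda>n. cdf (distr M borel
              (\<lambda>\<omega>. (S n \<omega> - real n * (p - q) * X1 \<omega>) / sqrt (real n * (p + q - (p - q)\<^sup>2)))))
           (\<lambda>x. (p + q) * cdf std_normal_distribution x + r * indicator {0..} x)"
      unfolding weak_conv_def
    proof (intro allI impI)
      fix x :: real
      define W where "W m \<omega> = ((\<Sum>i<m. V i \<omega> - (p - q)) + (1 - (p - q))) / sqrt (real (Suc m) * (p + q - (p - q)\<^sup>2))" for m \<omega>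
      have Wm[measurable]: "W m \<in> borel_measurable M" for m unfolding W_def by measurable
      have indW: "indep_var borel X1 borel (W m)" for m
      proof -
        have "indep_var borel (Y 1) borel (\<lambda>\<omega>. \<Sum>i\<in>{2..Suc m}. Y i \<omega>)"
          by (rule indep_vars_sum[OF _ _ indep_vars_subset[OF indep]]) auto
        hence "indep_var borel (id \<circ> Y 1) borel ((\<lambda>s. (s - real m * (p - q) + (1 - (p - q))) / sqrt (real (Suc m) * (p + q - (p - q)\<^sup>2))) \<circ> (\<lambda>\<omega>. \<Sum>i\<in>{2..Suc m}. Y i \<omega>))"
          by (rule indep_var_compose) auto
        moreover have "id \<circ> Y 1 = X1" by (simp add: Y_def)
        moreover have "((\<lambda>s. (s - real m * (p - q) + (1 - (p - q))) / sqrt (real (Suc m) * (p + q - (p - q)\<^sup>2))) \<circ> (\<lambda>\<omega>. \<Sum>i\<in>{2..Suc m}. Y i \<omega>)) = W m"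
        proof -
          have e: "(\<Sum>i<m. V i \<omega> - (p - q)) = (\<Sum>i<m. V i \<omega>) - real m * (p - q)" for \<omega> by (simp add: sum_subtractf)
          show ?thesis unfolding comp_def sumY W_def e by simp
        qed
        ultimately show ?thesis by simp
      qed
      have Qeq: "(\<lambda>\<omega>. (S (Suc m) \<omega> - real (Suc m) * (p - q) * X1 \<omega>) / sqrt (real (Suc m) * (p + q - (p - q)\<^sup>2)))
          = (\<lambda>\<omega>. X1 \<omega> * W m \<omega>)" for m
        unfolding key W_def by (simp add: fun_eq_iff)
      have cdfeq: "cdf (distr M borel (\<lambda>\<omega>. (S (Suc m) \<omega> - real (Suc m) * (p - q) * X1 \<omega>) / sqrt (real (Suc m) * (p + q - (p - q)\<^sup>2)))) x
         = p * prob {\<omega>\<in>space M. W m \<omega> \<le> x} + q * prob {\<omega>\<in>space M. - W m \<omega> \<le> x} + r * indicator {0..} x" for m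
      proof -
        have "cdf (distr M borel (\<lambda>\<omega>. X1 \<omega> * W m \<omega>)) x = prob {\<omega>\<in>space M. X1 \<omega> * W m \<omega> \<le> x}"
          unfolding cdf_def by (subst measure_distr) (auto intro!: arg_cong[where f=prob])
        also have "\<dots> = p * prob {\<omega>\<in>space M. W m \<omega> \<le> x} + q * prob {\<omega>\<in>space M. - W m \<omega> \<le> x} + r * indicator {0..} x"
          by (rule mixture[OF indW dX pqr])
        finally show ?thesis by (simp only: Qeq)
      qed
      have l1: "(\<lambda>m. prob {\<omega>\<in>space M. W m \<omega> \<le> x}) \<longlonglongrightarrow> cdf std_normal_distribution x"
        unfolding W_def using clt_three[OF indV dV pqr p(1) q(1)] r by simp
      have l2: "(\<lambda>m. prob {\<omega>\<in>space M. - W m \<omega> \<le> x}) \<longlonglongrightarrow> cdf std_normal_distribution x"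
      proof -
        have "(\<lambda>m. prob {\<omega>\<in>space M. ((\<Sum>i<m. - V i \<omega> - (q - p)) + (- (1 - (p - q)))) / sqrt (real (Suc m) * (q + p - (q - p)\<^sup>2)) \<le> x})
           \<longlonglongrightarrow> cdf std_normal_distribution x"
          using clt_three[OF indVn dVn _ q(1) p(1)] r pqr by simp
        moreover have "((\<Sum>i<m. - V i \<omega> - (q - p)) + (- (1 - (p - q)))) / sqrt (real (Suc m) * (q + p - (q - p)\<^sup>2)) = - W m \<omega>" for m \<omega>
        proof -
          have "(\<Sum>i<m. - V i \<omega> - (q - p)) = - (\<Sum>i<m. V i \<omega> - (p - q))"
            by (simp add: sum_negf[symmetric] algebra_simps)
          moreover have "(q - p)\<^sup>2 = (p - q)\<^sup>2" by (simp add: power2_commute)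
          ultimately show ?thesis by (simp add: W_def add.commute minus_divide_left)
        qed
        ultimately show ?thesis by simp
      qed
      have "(\<lambda>m. p * prob {\<omega>\<in>space M. W m \<omega> \<le> x} + q * prob {\<omega>\<in>space M. - W m \<omega> \<le> x} + r * indicator {0..} x)
          \<longlonglongrightarrow> p * cdf std_normal_distribution x + q * cdf std_normal_distribution x + r * indicator {0..} x"
        by (intro tendsto_intros l1 l2)
      hence "(\<lambda>m. cdf (distr M borel (\<lambda>\<omega>. (S (Suc m) \<omega> - real (Suc m) * (p - q) * X1 \<omega>) / sqrt (real (Suc m) * (p + q - (p - q)\<^sup>2)))) x)
          \<longlonglongrightarrow> (p + q) * cdf std_normal_distribution x + r * indicator {0..} x"
        by (simp only: cdfeq distrib_right)
      thus "(\<lambda>n. cdf (distr M borel (\<lambda>\<omega>. (S n \<omega> - real n * (p - q) * X1 \<omega>) / sqrt (real n * (p + q - (p - q)\<^sup>2)))) x)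
          \<longlonglongrightarrow> (p + q) * cdf std_normal_distribution x + r * indicator {0..} x"
        by (rule LIMSEQ_imp_Suc)
    qed
  next
    show "AE \<omega> in M. (\<lambda>n. (S n \<omega> - real n * (p - q) * X1 \<omega>) / real n) \<longlonglongrightarrow> 0"
      using slln_three[OF indV dV pqr]
    proof eventually_elim
      case (elim \<omega>)
      have "(\<lambda>m. X1 \<omega> * (((\<Sum>i<m. V i \<omega> - (p - q)) + (1 - (p - q))) / real (Suc m))) \<longlonglongrightarrow> X1 \<omega> * (0 + 0)"
        unfolding add_divide_distrib by (intro tendsto_intros elim LIMSEQ_Suc[OF lim_const_over_n])
      hence "(\<lambda>m. (S (Suc m) \<omega> - real (Suc m) * (p - q) * X1 \<omega>) / real (Suc m)) \<longlonglongrightarrow> 0"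
        unfolding key by (simp only: times_divide_eq_right mult_zero_right add_0_left)
      thus ?case by (rule LIMSEQ_imp_Suc)
    qed
  qed
qed

end
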